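(* Given a finite set $P\subset\mathbb{R}^2$ partitioned into nonempty sets $P_1,\dots,P_k$, there is always a minimum-length two-level rectilinear Steiner tree for $P_1,\dots,P_k$ contained in the Hanan grid of $P$.
   Context: The Hanan grid of $P$ is the union of all horizontal and vertical lines passing through points of $P$. A rectilinear Steiner tree for a finite set $S\subset\mathbb{R}^2$ is a tree embedded in the plane with horizontal and vertical segments as edges whose vertex set contains $S$; its length is the sum of the $\ell_1$-lengths of its edges. A two-level rectilinear Steiner tree for $P_1,\dots,P_k$ is a tuple $(T_{top},T_1,\dots,T_k)$ where each $T_i$ is a rectilinear Steiner tree for $P_i$ and $T_{top}$ is a rectilinear Steiner tree intersecting (as a point set) every $T_i$; its length is $l(T_{top})+\sum_i l(T_i)$. *)

theory Defs
  imports "HOL-Analysis.Analysis"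
begin

type_synonym pt = "real \<times> real"

text \<open>A rectilinear Steiner tree is given by a finite vertex set V and a set E of
  edges (u,v) (each unordered edge stored once, in one orientation).\<close>

definition l1dist :: "pt \<Rightarrow> pt \<Rightarrow> real" where
  "l1dist u v = \<bar>fst u - fst v\<bar> + \<bar>snd u - snd v\<bar>"

definition tree_len :: "(pt \<times> pt) set \<Rightarrow> real" where
  "tree_len E = (\<Sum>(u,v)\<in>E. l1dist u v)"

definition tree_pts :: "pt set \<Rightarrow> (pt \<times> pt) set \<Rightarrow> pt set" where
  "tree_pts V E = V \<union> (\<Union>(u,v)\<in>E. closed_segment u v)"

definition is_rst :: "pt set \<Rightarrow> pt set \<Rightarrow> (pt \<times> pt) set \<Rightarrow> bool" where
  "is_rst S V E \<longleftrightarrow>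
     finite V \<and> V \<noteq> {} \<and> S \<subseteq> V \<and>
     (\<forall>(u,v)\<in>E. u \<in> V \<and> v \<in> V \<and> u \<noteq> v \<and> (fst u = fst v \<or> snd u = snd v)) \<and>
     (\<forall>(u,v)\<in>E. (v,u) \<notin> E) \<and>
     \<comment> \<open>tree: connected with |E| = |V| - 1\<close>
     card E + 1 = card V \<and>
     (\<forall>u\<in>V. \<forall>v\<in>V. (u,v) \<in> (E \<union> E\<inverse>)\<^sup>*) \<and>
     \<comment> \<open>embedded in the plane: no vertex in the interior of an edge, and
        distinct edges meet only in common endpoints\<close>
     (\<forall>(u,v)\<in>E. \<forall>w\<in>V. w \<in> closed_segment u v \<longrightarrow> w = u \<or> w = v) \<and>
     (\<forall>(u,v)\<in>E. \<forall>(u',v')\<in>E. (u,v) \<noteq> (u',v') \<longrightarrow>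
        closed_segment u v \<inter> closed_segment u' v' \<subseteq> {u,v} \<inter> {u',v'})"

definition two_level_rst ::
  "nat \<Rightarrow> (nat \<Rightarrow> pt set) \<Rightarrow> pt set \<Rightarrow> (pt \<times> pt) set \<Rightarrow> (nat \<Rightarrow> pt set \<times> (pt \<times> pt) set) \<Rightarrow> bool" where
  "two_level_rst k Ps Vt Et T \<longleftrightarrow>
     is_rst {} Vt Et \<and>
     (\<forall>i<k. is_rst (Ps i) (fst (T i)) (snd (T i)) \<and>
            tree_pts Vt Et \<inter> tree_pts (fst (T i)) (snd (T i)) \<noteq> {})"

definition two_level_len ::
  "nat \<Rightarrow> (pt \<times> pt) set \<Rightarrow> (nat \<Rightarrow> pt set \<times> (pt \<times> pt) set) \<Rightarrow> real" where
  "two_level_len k Et T = tree_len Et + (\<Sum>i<k. tree_len (snd (T i)))"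

definition hanan_grid :: "pt set \<Rightarrow> pt set" where
  "hanan_grid P = {p. \<exists>q\<in>P. fst p = fst q \<or> snd p = snd q}"

end

theory Submission
  imports Defs
begin


definition adj :: "real set \<Rightarrow> (real \<times> real) set" where
  "adj Z = {(z,z'). z \<in> Z \<and> z' \<in> Z \<and> z < z' \<and> (\<forall>w\<in>Z. \<not>(z < w \<and> w < z'))}"

definition segA :: "real set \<Rightarrow> real \<Rightarrow> real \<Rightarrow> (real \<times> real) set" where
  "segA Z a b = {(z,z'). (z,z') \<in> adj Z \<and> a \<le> z \<and> z' \<le> b}"

lemma finite_segA: "finite Z \<Longrightarrow> finite (segA Z a b)"
  by (rule finite_subset[of _ "Z \<times> Z"]) (auto simp: segA_def adj_def)

lemma segA_empty: "segA Z a a = {}"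
  by (auto simp: segA_def adj_def)

lemma segA_path:
  assumes "finite Z" "a \<in> Z" "b \<in> Z" "a \<le> b"
  shows "(a,b) \<in> (segA Z a b)\<^sup>* \<and> (\<Sum>(z,z')\<in>segA Z a b. z' - z) = b - a"
  using assms
proof (induction "card {z\<in>Z. a < z \<and> z \<le> b}" arbitrary: a rule: less_induct)
  case less
  show ?case
  proof (cases "a = b")
    case True then show ?thesis by (simp add: segA_empty)
  next
    case False
    hence ab: "a < b" using less by auto
    define M where "M = {z\<in>Z. a < z \<and> z \<le> b}"
    have fM: "finite M" using less by (simp add: M_def)
    have bM: "b \<in> M" using less ab by (simp add: M_def)
    define a' where "a' = Min M"
    have a'M: "a' \<in> M" using fM bM by (auto simp: a'_def intro: Min_in)
    have a'le: "\<And>z. z \<in> M \<Longrightarrow> a' \<le> z" using fM by (simp add: a'_def)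
    have aa': "(a,a') \<in> adj Z"
      using a'M a'le less(3) unfolding adj_def M_def by force
    have eq: "segA Z a b = insert (a,a') (segA Z a' b)"
    proof (intro equalityI subsetI)
      fix e assume e: "e \<in> segA Z a b"
      obtain z z' where ez: "e = (z,z')" by force
      show "e \<in> insert (a,a') (segA Z a' b)"
      proof (cases "z = a")
        case True
        have "z' \<in> M" using e ez True by (auto simp: segA_def adj_def M_def)
        hence "a' \<le> z'" by (rule a'le)
        moreover have "\<not> (a' < z')" using e ez True a'M by (auto simp: segA_def adj_def M_def)
        ultimately show ?thesis using ez True by auto
      next
        case False
        have "z \<in> M" using e ez False by (auto simp: segA_def adj_def M_def)
        hence "a' \<le> z" by (rule a'le)
        thus ?thesis using e ez by (auto simp: segA_def)
      qed
    next
      fix e assume "e \<in> insert (a,a') (segA Z a' b)"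
      thus "e \<in> segA Z a b" using aa' a'M by (auto simp: segA_def M_def)
    qed
    have notin: "(a,a') \<notin> segA Z a' b" using aa' by (auto simp: segA_def adj_def)
    have lt: "card {z\<in>Z. a' < z \<and> z \<le> b} < card {z\<in>Z. a < z \<and> z \<le> b}"
      apply (rule psubset_card_mono)
      using less(2) a'M by (auto simp: M_def)
    have IH: "(a',b) \<in> (segA Z a' b)\<^sup>* \<and> (\<Sum>(z,z')\<in>segA Z a' b. z' - z) = b - a'"
      using less(1)[OF lt less(2)] a'M less(4) by (auto simp: M_def)
    have "(a,b) \<in> (segA Z a b)\<^sup>*"
    proof -
      have "(a',b) \<in> (segA Z a b)\<^sup>*" using IH eq rtrancl_mono[of "segA Z a' b" "segA Z a b"] by auto
      moreover have "(a,a') \<in> segA Z a b" using eq by auto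
      ultimately show ?thesis by (meson converse_rtrancl_into_rtrancl)
    qed
    moreover have "(\<Sum>(z,z')\<in>segA Z a b. z' - z) = b - a"
      using IH notin finite_segA[OF less(2)] by (simp add: eq)
    ultimately show ?thesis by blast
  qed
qed

lemma segA_mono: "b \<le> b' \<Longrightarrow> segA Z a b \<subseteq> segA Z a b'"
  by (auto simp: segA_def)

lemma segA_endpoints:
  assumes "finite Z" "a \<in> Z" "(z,z') \<in> segA Z a b"
  shows "(a,z) \<in> (segA Z a b)\<^sup>* \<and> (a,z') \<in> (segA Z a b)\<^sup>*"
proof -
  have props: "z \<in> Z" "z' \<in> Z" "a \<le> z" "z < z'" "z' \<le> b" using assms(3) by (auto simp: segA_def adj_def)
  have "(a,z) \<in> (segA Z a z)\<^sup>*" using segA_path[OF assms(1,2) props(1,3)] by blast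
  moreover have "(a,z') \<in> (segA Z a z')\<^sup>*" using segA_path[OF assms(1,2) props(2)] props by auto
  ultimately show ?thesis using rtrancl_mono[OF segA_mono[of z b Z a]] rtrancl_mono[OF segA_mono[of z' b Z a]] props by auto
qed

lemma segA_last:
  assumes "(a,c) \<in> (segA Z a b)\<^sup>*" "a \<noteq> c"
  shows "\<exists>z. (z,c) \<in> segA Z a b"
  using assms by (cases rule: rtranclE) auto



lemma term_affine:
  fixes l c r x y :: real
  assumes "l < c" "c < r" "x = c \<or> x \<le> l \<or> x \<ge> r" "y = c \<or> y \<le> l \<or> y \<ge> r"
  defines "M \<equiv> \<lambda>t z. if z = c then t else z"
  shows "\<bar>y - x\<bar> = (r - c)/(r - l) * \<bar>M l y - M l x\<bar> + (c - l)/(r - l) * \<bar>M r y - M r x\<bar>"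
proof -
  have rl: "r - l > 0" using assms by auto
  have key: "\<bar>y - x\<bar> * (r - l) = (r - c) * \<bar>M l y - M l x\<bar> + (c - l) * \<bar>M r y - M r x\<bar>"
    using assms(1-4) unfolding M_def by (auto simp: abs_if algebra_simps)
  have "\<bar>y - x\<bar> = (\<bar>y - x\<bar> * (r - l)) / (r - l)" using rl by simp
  also have "\<dots> = ((r - c) * \<bar>M l y - M l x\<bar> + (c - l) * \<bar>M r y - M r x\<bar>) / (r - l)" using key by simp
  also have "\<dots> = (r - c)/(r - l) * \<bar>M l y - M l x\<bar> + (c - l)/(r - l) * \<bar>M r y - M r x\<bar>"
    by (simp add: add_divide_distrib)
  finally show ?thesis .
qed

lemma term_lo:
  fixes c r x y :: real
  assumes "c < r" "x = c \<or> x \<ge> r" "y = c \<or> y \<ge> r"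
  shows "\<bar>(if y = c then r else y) - (if x = c then r else x)\<bar> \<le> \<bar>y - x\<bar>"
  using assms by (auto simp: abs_if)

lemma term_hi:
  fixes c l x y :: real
  assumes "l < c" "x = c \<or> x \<le> l" "y = c \<or> y \<le> l"
  shows "\<bar>(if y = c then l else y) - (if x = c then l else x)\<bar> \<le> \<bar>y - x\<bar>"
  using assms by (auto simp: abs_if)

lemma snap1:
  fixes C X :: "real set" and I :: "'i set"
  assumes "finite C" "finite X" "X \<noteq> {}" "X \<subseteq> C" "finite I"
    "\<forall>i\<in>I. a i \<in> C \<and> b i \<in> C"
  shows "\<exists>g. (\<forall>x\<in>C. \<forall>y\<in>C. x \<le> y \<longrightarrow> g x \<le> g y) \<and> (\<forall>x\<in>C. g x \<in> X) \<and> (\<forall>x\<in>X. g x = x)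
     \<and> (\<Sum>i\<in>I. \<bar>g (b i) - g (a i)\<bar>) \<le> (\<Sum>i\<in>I. \<bar>b i - a i\<bar>)"
  using assms
proof (induction "card (C - X)" arbitrary: C a b rule: less_induct)
  case less
  show ?case
  proof (cases "C - X = {}")
    case True
    hence "C = X" using less by auto
    thus ?thesis by (rule_tac x=id in exI) auto
  next
    case False
    then obtain c where c: "c \<in> C" "c \<notin> X" by auto
    define C' where "C' = C - {c}"
    define Lo where "Lo = {z\<in>C'. z < c}"
    define Hi where "Hi = {z\<in>C'. z > c}"
    have fLo: "finite Lo" "finite Hi" using less(2) by (auto simp: Lo_def Hi_def C'_def)
    have C'split: "\<And>z. z \<in> C' \<Longrightarrow> z \<in> Lo \<or> z \<in> Hi" by (auto simp: Lo_def Hi_def C'_def)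
    have XC': "X \<subseteq> C'" using less c by (auto simp: C'_def)
    have ne: "Lo \<noteq> {} \<or> Hi \<noteq> {}" using XC' less(4) C'split by blast
    define f where "f = (\<lambda>t. \<Sum>i\<in>I. \<bar>(if b i = c then t else b i) - (if a i = c then t else a i)\<bar>)"
    have f_c: "f c = (\<Sum>i\<in>I. \<bar>b i - a i\<bar>)" by (simp add: f_def)
    have pos: "\<And>z. z \<in> C \<Longrightarrow> z = c \<or> (Lo \<noteq> {} \<and> z \<le> Max Lo) \<or> (Hi \<noteq> {} \<and> z \<ge> Min Hi)"
    proof -
      fix z assume "z \<in> C"
      show "z = c \<or> (Lo \<noteq> {} \<and> z \<le> Max Lo) \<or> (Hi \<noteq> {} \<and> z \<ge> Min Hi)"
      proof (cases "z = c")
        case False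
        hence "z \<in> C'" using \<open>z \<in> C\<close> by (simp add: C'_def)
        then consider "z \<in> Lo" | "z \<in> Hi" using C'split by blast
        thus ?thesis using fLo by cases auto
      qed simp
    qed
    have LoI: "Lo \<noteq> {} \<Longrightarrow> Max Lo \<in> C' \<and> Max Lo < c" using fLo Max_in[of Lo] by (auto simp: Lo_def)
    have HiI: "Hi \<noteq> {} \<Longrightarrow> Min Hi \<in> C' \<and> Min Hi > c" using fLo Min_in[of Hi] by (auto simp: Hi_def)
    obtain c' where c': "c' \<in> C'" "f c' \<le> f c"
      and cc': "(Hi \<noteq> {} \<and> c' = Min Hi) \<or> (Lo \<noteq> {} \<and> c' = Max Lo)"
    proof (cases "Lo = {}")
      case True
      hence H: "Hi \<noteq> {}" using ne by auto
      have "f (Min Hi) \<le> f c" unfolding f_def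
      proof (rule sum_mono)
        fix i assume "i \<in> I"
        show "\<bar>(if b i = c then Min Hi else b i) - (if a i = c then Min Hi else a i)\<bar> \<le> \<bar>(if b i = c then c else b i) - (if a i = c then c else a i)\<bar>"
        proof -
          have "a i = c \<or> a i \<ge> Min Hi" "b i = c \<or> b i \<ge> Min Hi"
            using pos less(7) True \<open>i \<in> I\<close> by blast+
          thus ?thesis using term_lo[of c "Min Hi" "a i" "b i"] HiI[OF H] by simp
        qed
      qed
      thus ?thesis using that HiI[OF H] H by blast
    next
      case False
      note L = this
      show ?thesis
      proof (cases "Hi = {}")
        case True
        have "f (Max Lo) \<le> f c" unfolding f_def
        proof (rule sum_mono)
          fix i assume "i \<in> I"
          show "\<bar>(if b i = c then Max Lo else b i) - (if a i = c then Max Lo else a i)\<bar> \<le> \<bar>(if b i = c then c else b i) - (if a i = c then c else a i)\<bar>"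
          proof -
            have "a i = c \<or> a i \<le> Max Lo" "b i = c \<or> b i \<le> Max Lo"
              using pos less(7) True \<open>i \<in> I\<close> by blast+
            thus ?thesis using term_hi[of "Max Lo" c "a i" "b i"] LoI[OF L] by simp
          qed
        qed
        thus ?thesis using that LoI[OF L] L by blast
      next
        case False
        note H = this
        define l where "l = Max Lo"
        define r where "r = Min Hi"
        have lcr: "l < c" "c < r" using LoI[OF L] HiI[OF H] by (auto simp: l_def r_def)
        have "f c = (r - c)/(r - l) * f l + (c - l)/(r - l) * f r"
          unfolding f_def sum_distrib_left sum.distrib[symmetric]
        proof (rule sum.cong[OF refl])
          fix i assume "i \<in> I"
          hence "a i = c \<or> a i \<le> l \<or> a i \<ge> r" "b i = c \<or> b i \<le> l \<or> b i \<ge> r"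
            using pos less(7) L H by (auto simp: l_def r_def)
          thus "\<bar>(if b i = c then c else b i) - (if a i = c then c else a i)\<bar> =
            (r - c)/(r - l) * \<bar>(if b i = c then l else b i) - (if a i = c then l else a i)\<bar> +
            (c - l)/(r - l) * \<bar>(if b i = c then r else b i) - (if a i = c then r else a i)\<bar>"
            using term_affine[OF lcr, of "a i" "b i"] by simp
        qed
        moreover define \<alpha> where "\<alpha> = (r - c)/(r - l)"
        moreover define \<beta> where "\<beta> = (c - l)/(r - l)"
        moreover have ab: "\<alpha> \<ge> 0" "\<beta> \<ge> 0" "\<alpha> + \<beta> = 1"
        proof -
          show "\<alpha> \<ge> 0" "\<beta> \<ge> 0" using lcr by (simp_all add: \<alpha>_def \<beta>_def)
          have "\<alpha> + \<beta> = ((r - c) + (c - l))/(r - l)" unfolding \<alpha>_def \<beta>_def by (rule add_divide_distrib[symmetric])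
          also have "\<dots> = 1" using lcr by simp
          finally show "\<alpha> + \<beta> = 1" .
        qed
        ultimately have fc: "f c = \<alpha> * f l + \<beta> * f r" by simp
        have m1: "\<alpha> * min (f l) (f r) \<le> \<alpha> * f l" by (rule mult_left_mono) (use ab in auto)
        have m2: "\<beta> * min (f l) (f r) \<le> \<beta> * f r" by (rule mult_left_mono) (use ab in auto)
        have m3: "\<alpha> * min (f l) (f r) + \<beta> * min (f l) (f r) = (\<alpha> + \<beta>) * min (f l) (f r)"
          by (simp add: distrib_right)
        have "min (f l) (f r) \<le> f c" using m1 m2 m3 ab(3) fc by simp
        show ?thesis
        proof (cases "f l \<le> f r")
          case True
          thus ?thesis using that[of l] \<open>min (f l) (f r) \<le> f c\<close> LoI[OF L] L by (simp add: l_def)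
        next
          case False
          thus ?thesis using that[of r] \<open>min (f l) (f r) \<le> f c\<close> HiI[OF H] H by (simp add: r_def)
        qed
      qed
    qed
    define m where "m = (\<lambda>z. if z = c then c' else z)"
    have mC: "\<And>z. z \<in> C \<Longrightarrow> m z \<in> C'" using c' by (auto simp: m_def C'_def)
    have mX: "\<And>z. z \<in> X \<Longrightarrow> m z = z" using c by (auto simp: m_def)
    have mmono: "\<And>x y. x \<in> C \<Longrightarrow> y \<in> C \<Longrightarrow> x \<le> y \<Longrightarrow> m x \<le> m y"
    proof -
      fix x y assume xy: "x \<in> C" "y \<in> C" "x \<le> y"
      show "m x \<le> m y"
      proof (cases "x = c")
        case True
        show ?thesis
        proof (cases "y = c")
          case False
          hence "y \<in> Hi" using xy True by (auto simp: Hi_def C'_def)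
          thus ?thesis using True False cc' fLo LoI HiI Min_le[of Hi y] by (fastforce simp: m_def Hi_def)
        qed (simp add: True m_def)
      next
        case False
        show ?thesis
        proof (cases "y = c")
          case True
          hence "x \<in> Lo" using xy False by (auto simp: Lo_def C'_def)
          thus ?thesis using True False cc' fLo LoI HiI Max_ge[of Lo x] by (fastforce simp: m_def Lo_def)
        next
          case False2: False
          show ?thesis using xy False False2 unfolding m_def by simp
        qed
      qed
    qed
    have lt: "card (C' - X) < card (C - X)"
      using c less(2) by (auto simp: C'_def intro!: psubset_card_mono)
    obtain g where g: "\<forall>x\<in>C'. \<forall>y\<in>C'. x \<le> y \<longrightarrow> g x \<le> g y" "\<forall>x\<in>C'. g x \<in> X" "\<forall>x\<in>X. g x = x"
      "(\<Sum>i\<in>I. \<bar>g (m (b i)) - g (m (a i))\<bar>) \<le> (\<Sum>i\<in>I. \<bar>m (b i) - m (a i)\<bar>)"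
      using less(1)[OF lt _ less(3,4) XC' less(6), of "m \<circ> a" "m \<circ> b"] less(2,7) mC
      by (auto simp: C'_def)
    have "(\<Sum>i\<in>I. \<bar>m (b i) - m (a i)\<bar>) = f c'" by (simp add: f_def m_def)
    show ?thesis
    proof (rule exI[of _ "g \<circ> m"], intro conjI ballI impI)
      fix x y assume "x \<in> C" "y \<in> C" "x \<le> y"
      have "m x \<le> m y" "m x \<in> C'" "m y \<in> C'" using mmono mC \<open>x \<in> C\<close> \<open>y \<in> C\<close> \<open>x \<le> y\<close> by auto
      thus "(g \<circ> m) x \<le> (g \<circ> m) y" using g(1) unfolding o_def by blast
    next
      fix x assume "x \<in> C" thus "(g \<circ> m) x \<in> X" using g(2) mC unfolding o_def by blast
    next
      fix x assume "x \<in> X" thus "(g \<circ> m) x = x" using g(3) mX unfolding o_def by metis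
    next
      show "(\<Sum>i\<in>I. \<bar>(g \<circ> m) (b i) - (g \<circ> m) (a i)\<bar>) \<le> (\<Sum>i\<in>I. \<bar>b i - a i\<bar>)"
        using g(4) c'(2) f_c \<open>(\<Sum>i\<in>I. \<bar>m (b i) - m (a i)\<bar>) = f c'\<close> unfolding o_def by linarith
    qed
  qed
qed



definition gedges :: "real set \<Rightarrow> real set \<Rightarrow> (pt \<times> pt) set" where
  "gedges X Y = {((x,y),(x',y)) | x x' y. (x,x') \<in> adj X \<and> y \<in> Y}
              \<union> {((x,y),(x,y')) | x y y'. x \<in> X \<and> (y,y') \<in> adj Y}"

definition hseg :: "real set \<Rightarrow> real \<Rightarrow> real \<Rightarrow> real \<Rightarrow> (pt \<times> pt) set" where
  "hseg X y a b = (\<lambda>(z,z'). ((z,y),(z',y))) ` segA X a b"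

definition vseg :: "real set \<Rightarrow> real \<Rightarrow> real \<Rightarrow> real \<Rightarrow> (pt \<times> pt) set" where
  "vseg Y x a b = (\<lambda>(z,z'). ((x,z),(x,z'))) ` segA Y a b"

definition sedges :: "real set \<Rightarrow> real set \<Rightarrow> pt \<Rightarrow> pt \<Rightarrow> (pt \<times> pt) set" where
  "sedges X Y p q = (if snd p = snd q then hseg X (snd p) (min (fst p) (fst q)) (max (fst p) (fst q))
     else if fst p = fst q then vseg Y (fst p) (min (snd p) (snd q)) (max (snd p) (snd q)) else {})"

definition inbox :: "pt \<Rightarrow> pt \<Rightarrow> pt \<Rightarrow> bool" where
  "inbox w u v \<longleftrightarrow> min (fst u) (fst v) \<le> fst w \<and> fst w \<le> max (fst u) (fst v) \<and>
                   min (snd u) (snd v) \<le> snd w \<and> snd w \<le> max (snd u) (snd v)"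

lemma rtrancl_map_img:
  assumes "(a,b) \<in> S\<^sup>*"
  shows "(f a, f b) \<in> ((\<lambda>(z,z'). (f z, f z')) ` S)\<^sup>*"
  using assms
proof (induction rule: rtrancl_induct)
  case (step y z)
  hence "(f y, f z) \<in> (\<lambda>(z,z'). (f z, f z')) ` S" by force
  thus ?case using step by (meson rtrancl.rtrancl_into_rtrancl)
qed simp

lemma rtrancl_sym: "(a,b) \<in> (R \<union> R\<inverse>)\<^sup>* \<Longrightarrow> (b,a) \<in> (R \<union> R\<inverse>)\<^sup>*"
proof -
  assume "(a,b) \<in> (R \<union> R\<inverse>)\<^sup>*"
  hence "(b,a) \<in> ((R \<union> R\<inverse>)\<inverse>)\<^sup>*" by (simp add: rtrancl_converse)
  moreover have "(R \<union> R\<inverse>)\<inverse> = R \<union> R\<inverse>" by auto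
  ultimately show ?thesis by simp
qed

lemma rt_sub: "(a,b) \<in> R\<^sup>* \<Longrightarrow> R \<subseteq> S \<Longrightarrow> (a,b) \<in> (S \<union> S\<inverse>)\<^sup>*"
  using rtrancl_mono[of R "S \<union> S\<inverse>"] by blast

lemma segment_box:
  assumes "w \<in> closed_segment u v"
  shows "inbox w u v"
proof -
  obtain t where t: "0 \<le> t" "t \<le> 1" "w = (1 - t) *\<^sub>R u + t *\<^sub>R v"
    using assms by (auto simp: closed_segment_def)
  have f: "fst w = (1 - t) * fst u + t * fst v" "snd w = (1 - t) * snd u + t * snd v" using t(3) by simp_all
  have c1: "min a b \<le> (1 - t) * a + t * b \<and> (1 - t) * a + t * b \<le> max a b" for a b :: real
  proof -
    have "(1 - t) * a + t * b \<in> closed_segment a b" using t(1,2) by (auto simp: closed_segment_def)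
    thus ?thesis by (auto simp: closed_segment_eq_real_ivl split: if_splits)
  qed
  show ?thesis unfolding inbox_def f using c1 by blast
qed

lemma segA_sub_adj: "segA Z a b \<subseteq> adj Z" by (auto simp: segA_def)

lemma sedges_sub:
  assumes "p \<in> X \<times> Y" "q \<in> X \<times> Y"
  shows "sedges X Y p q \<subseteq> gedges X Y"
proof
  fix e assume e: "e \<in> sedges X Y p q"
  show "e \<in> gedges X Y"
  proof (cases "snd p = snd q")
    case True
    then obtain z z' where "(z,z') \<in> adj X" "e = ((z, snd p), (z', snd p))"
      using e by (auto simp: sedges_def hseg_def segA_def)
    thus ?thesis using assms(1) unfolding gedges_def by auto
  next
    case False
    then obtain z z' where "(z,z') \<in> adj Y" "e = ((fst p, z), (fst p, z'))"
      using e by (auto simp: sedges_def vseg_def segA_def split: if_splits)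
    thus ?thesis using assms(1) unfolding gedges_def by auto
  qed
qed

lemma finite_sedges: "finite X \<Longrightarrow> finite Y \<Longrightarrow> finite (sedges X Y p q)"
  by (auto simp: sedges_def hseg_def vseg_def finite_segA)

lemma adj_lt: "(z,z') \<in> adj Z \<Longrightarrow> z < z'" by (auto simp: adj_def)

lemma hseg_props:
  assumes "finite X" "a \<in> X" "b \<in> X" "a \<le> b"
  shows "((a,y),(b,y)) \<in> (hseg X y a b)\<^sup>*"
    "(\<Sum>e\<in>hseg X y a b. l1dist (fst e) (snd e)) = b - a"
    "\<And>e. e \<in> hseg X y a b \<Longrightarrow> ((a,y), fst e) \<in> (hseg X y a b)\<^sup>* \<and> ((a,y), snd e) \<in> (hseg X y a b)\<^sup>*"
proof -
  note P = segA_path[OF assms]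
  let ?f = "\<lambda>z::real. (z,y)"
  have img: "hseg X y a b = (\<lambda>(z,z'). (?f z, ?f z')) ` segA X a b" by (simp add: hseg_def)
  show "((a,y),(b,y)) \<in> (hseg X y a b)\<^sup>*" using rtrancl_map_img[OF conjunct1[OF P], of ?f] img by simp
  have inj: "inj_on (\<lambda>(z,z'). ((z,y),(z',y))) (segA X a b)" by (auto simp: inj_on_def)
  have "(\<Sum>e\<in>hseg X y a b. l1dist (fst e) (snd e)) = (\<Sum>(z,z')\<in>segA X a b. l1dist (z,y) (z',y))"
    unfolding hseg_def by (subst sum.reindex[OF inj]) (simp add: case_prod_unfold)
  also have "\<dots> = (\<Sum>(z,z')\<in>segA X a b. z' - z)"
    by (rule sum.cong) (auto simp: l1dist_def segA_def dest: adj_lt)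
  finally show "(\<Sum>e\<in>hseg X y a b. l1dist (fst e) (snd e)) = b - a" using P by simp
  fix e assume "e \<in> hseg X y a b"
  then obtain z z' where zz: "(z,z') \<in> segA X a b" "e = ((z,y),(z',y))" by (auto simp: hseg_def)
  from segA_endpoints[OF assms(1,2) zz(1)] show "((a,y), fst e) \<in> (hseg X y a b)\<^sup>* \<and> ((a,y), snd e) \<in> (hseg X y a b)\<^sup>*"
    using rtrancl_map_img[of _ _ "segA X a b" ?f] img zz(2) by auto
qed

lemma vseg_props:
  assumes "finite Y" "a \<in> Y" "b \<in> Y" "a \<le> b"
  shows "((x,a),(x,b)) \<in> (vseg Y x a b)\<^sup>*"
    "(\<Sum>e\<in>vseg Y x a b. l1dist (fst e) (snd e)) = b - a"
    "\<And>e. e \<in> vseg Y x a b \<Longrightarrow> ((x,a), fst e) \<in> (vseg Y x a b)\<^sup>* \<and> ((x,a), snd e) \<in> (vseg Y x a b)\<^sup>*"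
proof -
  note P = segA_path[OF assms]
  let ?f = "\<lambda>z::real. (x,z)"
  have img: "vseg Y x a b = (\<lambda>(z,z'). (?f z, ?f z')) ` segA Y a b" by (simp add: vseg_def)
  show "((x,a),(x,b)) \<in> (vseg Y x a b)\<^sup>*" using rtrancl_map_img[OF conjunct1[OF P], of ?f] img by simp
  have inj: "inj_on (\<lambda>(z,z'). ((x,z),(x,z'))) (segA Y a b)" by (auto simp: inj_on_def)
  have "(\<Sum>e\<in>vseg Y x a b. l1dist (fst e) (snd e)) = (\<Sum>(z,z')\<in>segA Y a b. l1dist (x,z) (x,z'))"
    unfolding vseg_def by (subst sum.reindex[OF inj]) (simp add: case_prod_unfold)
  also have "\<dots> = (\<Sum>(z,z')\<in>segA Y a b. z' - z)"
    by (rule sum.cong) (auto simp: l1dist_def segA_def dest: adj_lt)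
  finally show "(\<Sum>e\<in>vseg Y x a b. l1dist (fst e) (snd e)) = b - a" using P by simp
  fix e assume "e \<in> vseg Y x a b"
  then obtain z z' where zz: "(z,z') \<in> segA Y a b" "e = ((x,z),(x,z'))" by (auto simp: vseg_def)
  from segA_endpoints[OF assms(1,2) zz(1)] show "((x,a), fst e) \<in> (vseg Y x a b)\<^sup>* \<and> ((x,a), snd e) \<in> (vseg Y x a b)\<^sup>*"
    using rtrancl_map_img[of _ _ "segA Y a b" ?f] img zz(2) by auto
qed



lemma sedges_props:
  assumes fin: "finite X" "finite Y" and pq: "p \<in> X \<times> Y" "q \<in> X \<times> Y" and ax: "fst p = fst q \<or> snd p = snd q"
  defines "R \<equiv> sedges X Y p q"
  shows "(p,q) \<in> (R \<union> R\<inverse>)\<^sup>*"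
    "(\<Sum>e\<in>R. l1dist (fst e) (snd e)) = l1dist p q"
    "\<And>e. e \<in> R \<Longrightarrow> (p, fst e) \<in> (R \<union> R\<inverse>)\<^sup>* \<and> (p, snd e) \<in> (R \<union> R\<inverse>)\<^sup>*"
    "\<And>w. w \<in> X \<times> Y \<Longrightarrow> inbox w p q \<Longrightarrow> w = p \<or> w = q \<or> (\<exists>e\<in>R. w = snd e)"
proof -
  have "\<exists>s. (s,p) \<in> (R \<union> R\<inverse>)\<^sup>* \<and> (s,q) \<in> (R \<union> R\<inverse>)\<^sup>* \<and> (\<forall>e\<in>R. (s, fst e) \<in> (R \<union> R\<inverse>)\<^sup>* \<and> (s, snd e) \<in> (R \<union> R\<inverse>)\<^sup>*)
     \<and> (\<Sum>e\<in>R. l1dist (fst e) (snd e)) = l1dist p q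
     \<and> (\<forall>w. w \<in> X \<times> Y \<longrightarrow> inbox w p q \<longrightarrow> w = p \<or> w = q \<or> (\<exists>e\<in>R. w = snd e))"
  proof (cases "snd p = snd q")
    case True
    define a where "a = min (fst p) (fst q)"
    define b where "b = max (fst p) (fst q)"
    define y where "y = snd p"
    have ab: "a \<in> X" "b \<in> X" "a \<le> b" using pq by (auto simp: a_def b_def min_def max_def)
    have R: "R = hseg X y a b" using True by (simp add: R_def sedges_def a_def b_def y_def)
    note H = hseg_props[OF fin(1) ab, where y=y]
    have e1: "(fst p, y) = p" "(fst q, y) = q" using True by (simp_all add: y_def prod_eq_iff)
    have pq': "{p,q} = {(a,y),(b,y)}"
    proof (cases "fst p \<le> fst q")
      case True
      hence "a = fst p" "b = fst q" by (simp_all add: a_def b_def)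
      thus ?thesis using e1 by simp
    next
      case False
      hence "a = fst q" "b = fst p" by (simp_all add: a_def b_def)
      thus ?thesis using e1 by auto
    qed
    have sb: "((a,y),(b,y)) \<in> (R \<union> R\<inverse>)\<^sup>*" using rt_sub[OF H(1), of R] R by simp
    have sp: "((a,y),p) \<in> (R \<union> R\<inverse>)\<^sup>*" "((a,y),q) \<in> (R \<union> R\<inverse>)\<^sup>*"
    proof -
      have "p \<in> {(a,y),(b,y)}" "q \<in> {(a,y),(b,y)}" using pq' by blast+
      thus "((a,y),p) \<in> (R \<union> R\<inverse>)\<^sup>*" "((a,y),q) \<in> (R \<union> R\<inverse>)\<^sup>*" using sb by auto
    qed
    have len: "l1dist p q = b - a" using True
      by (simp add: l1dist_def a_def b_def abs_if min_def max_def)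
    show ?thesis
    proof (rule exI[of _ "(a,y)"], intro conjI ballI allI impI)
      show "((a,y),p) \<in> (R \<union> R\<inverse>)\<^sup>*" "((a,y),q) \<in> (R \<union> R\<inverse>)\<^sup>*" by (fact sp)+
      fix e assume "e \<in> R"
      thus "((a,y), fst e) \<in> (R \<union> R\<inverse>)\<^sup>*" "((a,y), snd e) \<in> (R \<union> R\<inverse>)\<^sup>*"
        using H(3)[of e] R rt_sub[of _ _ "hseg X y a b" R] by auto
    next
      show "(\<Sum>e\<in>R. l1dist (fst e) (snd e)) = l1dist p q" using H(2) R len by simp
    next
      fix w assume w: "w \<in> X \<times> Y" "inbox w p q"
      have wy: "snd w = y" and wa: "a \<le> fst w" "fst w \<le> b" using w(2) True by (auto simp: inbox_def a_def b_def y_def)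
      show "w = p \<or> w = q \<or> (\<exists>e\<in>R. w = snd e)"
      proof (cases "fst w = a")
        case True
        hence "w = (a,y)" using wy by (cases w) auto
        thus ?thesis using pq' by auto
      next
        case False
        have "(a, fst w) \<in> (segA X a (fst w))\<^sup>*" using segA_path[OF fin(1) ab(1), of "fst w"] w(1) wa by auto
        then obtain z where "(z, fst w) \<in> segA X a (fst w)" using segA_last[of a "fst w"] False by blast
        hence "(z, fst w) \<in> segA X a b" using segA_mono[OF wa(2)] by blast
        hence "((z,y),(fst w,y)) \<in> R" unfolding R hseg_def by force
        moreover have "w = (fst w, y)" using wy by (cases w) auto
        ultimately show ?thesis by force
      qed
    qed
  next
    case False
    hence fx: "fst p = fst q" using ax by auto
    define a where "a = min (snd p) (snd q)"
    define b where "b = max (snd p) (snd q)"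
    define x where "x = fst p"
    have ab: "a \<in> Y" "b \<in> Y" "a \<le> b" using pq by (auto simp: a_def b_def min_def max_def)
    have R: "R = vseg Y x a b" using False fx by (simp add: R_def sedges_def a_def b_def x_def)
    note H = vseg_props[OF fin(2) ab, where x=x]
    have e1: "(x, snd p) = p" "(x, snd q) = q" using fx by (simp_all add: x_def prod_eq_iff)
    have pq': "{p,q} = {(x,a),(x,b)}"
    proof (cases "snd p \<le> snd q")
      case True
      hence "a = snd p" "b = snd q" by (simp_all add: a_def b_def)
      thus ?thesis using e1 by simp
    next
      case False
      hence "a = snd q" "b = snd p" by (simp_all add: a_def b_def)
      thus ?thesis using e1 by auto
    qed
    have sb: "((x,a),(x,b)) \<in> (R \<union> R\<inverse>)\<^sup>*" using rt_sub[OF H(1), of R] R by simp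
    have sp: "((x,a),p) \<in> (R \<union> R\<inverse>)\<^sup>*" "((x,a),q) \<in> (R \<union> R\<inverse>)\<^sup>*"
    proof -
      have "p \<in> {(x,a),(x,b)}" "q \<in> {(x,a),(x,b)}" using pq' by blast+
      thus "((x,a),p) \<in> (R \<union> R\<inverse>)\<^sup>*" "((x,a),q) \<in> (R \<union> R\<inverse>)\<^sup>*" using sb by auto
    qed
    have len: "l1dist p q = b - a" using fx
      by (simp add: l1dist_def a_def b_def abs_if min_def max_def)
    show ?thesis
    proof (rule exI[of _ "(x,a)"], intro conjI ballI allI impI)
      show "((x,a),p) \<in> (R \<union> R\<inverse>)\<^sup>*" "((x,a),q) \<in> (R \<union> R\<inverse>)\<^sup>*" by (fact sp)+
      fix e assume "e \<in> R"
      thus "((x,a), fst e) \<in> (R \<union> R\<inverse>)\<^sup>*" "((x,a), snd e) \<in> (R \<union> R\<inverse>)\<^sup>*"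
        using H(3)[of e] R rt_sub[of _ _ "vseg Y x a b" R] by auto
    next
      show "(\<Sum>e\<in>R. l1dist (fst e) (snd e)) = l1dist p q" using H(2) R len by simp
    next
      fix w assume w: "w \<in> X \<times> Y" "inbox w p q"
      have wx: "fst w = x" and wa: "a \<le> snd w" "snd w \<le> b" using w(2) fx by (auto simp: inbox_def a_def b_def x_def)
      show "w = p \<or> w = q \<or> (\<exists>e\<in>R. w = snd e)"
      proof (cases "snd w = a")
        case True
        hence "w = (x,a)" using wx by (cases w) auto
        thus ?thesis using pq' by auto
      next
        case False
        have "(a, snd w) \<in> (segA Y a (snd w))\<^sup>*" using segA_path[OF fin(2) ab(1), of "snd w"] w(1) wa by auto
        then obtain z where "(z, snd w) \<in> segA Y a (snd w)" using segA_last[of a "snd w"] False by blast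
        hence "(z, snd w) \<in> segA Y a b" using segA_mono[OF wa(2)] by blast
        hence "((x,z),(x,snd w)) \<in> R" unfolding R vseg_def by force
        moreover have "w = (x, snd w)" using wx by (cases w) auto
        ultimately show ?thesis by force
      qed
    qed
  qed
  then obtain s where sall: "(s,p) \<in> (R \<union> R\<inverse>)\<^sup>* \<and> (s,q) \<in> (R \<union> R\<inverse>)\<^sup>* \<and> (\<forall>e\<in>R. (s, fst e) \<in> (R \<union> R\<inverse>)\<^sup>* \<and> (s, snd e) \<in> (R \<union> R\<inverse>)\<^sup>*)
     \<and> (\<Sum>e\<in>R. l1dist (fst e) (snd e)) = l1dist p q
     \<and> (\<forall>w. w \<in> X \<times> Y \<longrightarrow> inbox w p q \<longrightarrow> w = p \<or> w = q \<or> (\<exists>e\<in>R. w = snd e))" ..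
  note s = sall[THEN conjunct1] sall[THEN conjunct2, THEN conjunct1] sall[THEN conjunct2, THEN conjunct2, THEN conjunct1]
    sall[THEN conjunct2, THEN conjunct2, THEN conjunct2, THEN conjunct1] sall[THEN conjunct2, THEN conjunct2, THEN conjunct2, THEN conjunct2]
  have ps: "(p,s) \<in> (R \<union> R\<inverse>)\<^sup>*" using rtrancl_sym[OF s(1)] .
  show "(p,q) \<in> (R \<union> R\<inverse>)\<^sup>*" using ps s(2) by (rule rtrancl_trans)
  show "(\<Sum>e\<in>R. l1dist (fst e) (snd e)) = l1dist p q" by (fact s(4))
  show "\<And>e. e \<in> R \<Longrightarrow> (p, fst e) \<in> (R \<union> R\<inverse>)\<^sup>* \<and> (p, snd e) \<in> (R \<union> R\<inverse>)\<^sup>*"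
    using ps s(3) rtrancl_trans[where r="R \<union> R\<inverse>"] by blast
  show "\<And>w. w \<in> X \<times> Y \<Longrightarrow> inbox w p q \<Longrightarrow> w = p \<or> w = q \<or> (\<exists>e\<in>R. w = snd e)" using s(5) by blast
qed



lemma gedgesE:
  assumes "(u,v) \<in> gedges X Y"
  obtains (H) x x' y where "(x,x') \<in> adj X" "y \<in> Y" "u = (x,y)" "v = (x',y)"
        | (V) x y y' where "x \<in> X" "(y,y') \<in> adj Y" "u = (x,y)" "v = (x,y')"
  using assms unfolding gedges_def by blast

lemma gedges_props:
  assumes "(u,v) \<in> gedges X Y"
  shows "u \<noteq> v" "fst u = fst v \<or> snd u = snd v" "(v,u) \<notin> gedges X Y" "u \<in> X \<times> Y" "v \<in> X \<times> Y"
proof -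
  have A: "u \<noteq> v \<and> (fst u = fst v \<or> snd u = snd v) \<and> (fst u < fst v \<and> snd u = snd v \<or> fst u = fst v \<and> snd u < snd v)
     \<and> u \<in> X \<times> Y \<and> v \<in> X \<times> Y"
    using assms
  proof (cases rule: gedgesE)
    case (H x x' y) thus ?thesis by (auto simp: adj_def)
  next
    case (V x y y') thus ?thesis by (auto simp: adj_def)
  qed
  have B: "fst v < fst u \<and> snd v = snd u \<or> fst v = fst u \<and> snd v < snd u" if "(v,u) \<in> gedges X Y"
    using that
  proof (cases rule: gedgesE)
    case (H x x' y) thus ?thesis by (auto simp: adj_def)
  next
    case (V x y y') thus ?thesis by (auto simp: adj_def)
  qed
  show "u \<noteq> v" "fst u = fst v \<or> snd u = snd v" "u \<in> X \<times> Y" "v \<in> X \<times> Y" using A by auto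
  show "(v,u) \<notin> gedges X Y" using A B by force
qed

lemma adj_between: "(z,z') \<in> adj Z \<Longrightarrow> w \<in> Z \<Longrightarrow> z \<le> w \<Longrightarrow> w \<le> z' \<Longrightarrow> w = z \<or> w = z'"
  unfolding adj_def by force

lemma adj_overlap:
  assumes "(z1,z1') \<in> adj Z" "(z2,z2') \<in> adj Z" "z1 \<le> s" "s \<le> z1'" "z2 \<le> s" "s \<le> z2'"
  shows "(z1,z1') = (z2,z2') \<or> (s = z1' \<and> s = z2) \<or> (s = z2' \<and> s = z1)"
proof -
  have A: "z1 \<in> Z" "z1' \<in> Z" "z1 < z1'" "\<forall>w\<in>Z. \<not>(z1 < w \<and> w < z1')" using assms(1) by (auto simp: adj_def)
  have B: "z2 \<in> Z" "z2' \<in> Z" "z2 < z2'" "\<forall>w\<in>Z. \<not>(z2 < w \<and> w < z2')" using assms(2) by (auto simp: adj_def)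
  consider "z1 < z2" | "z2 < z1" | "z1 = z2" by linarith
  thus ?thesis
  proof cases
    case 1
    hence "z1' \<le> z2" using A(4) B(1) by force
    thus ?thesis using assms by auto
  next
    case 2
    hence "z2' \<le> z1" using B(4) A(1) by force
    thus ?thesis using assms by auto
  next
    case 3
    have "\<not> z1' < z2'" using B(4) A(2) 3 A(3) by force
    moreover have "\<not> z2' < z1'" using A(4) B(2) 3 B(3) by force
    ultimately show ?thesis using 3 by auto
  qed
qed

lemma gedge_interior:
  assumes "(u,v) \<in> gedges X Y" "w \<in> X \<times> Y" "inbox w u v"
  shows "w = u \<or> w = v"
  using assms(1)
proof (cases rule: gedgesE)
  case (H x x' y)
  hence "x < x'" by (auto simp: adj_def)
  hence "x \<le> fst w" "fst w \<le> x'" "snd w = y" using assms(3) H by (auto simp: inbox_def)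
  hence "fst w = x \<or> fst w = x'" using adj_between[OF H(1), of "fst w"] assms(2) by (simp add: mem_Times_iff)
  thus ?thesis using H \<open>snd w = y\<close> by (cases w) auto
next
  case (V x y y')
  hence "y < y'" by (auto simp: adj_def)
  hence "y \<le> snd w" "snd w \<le> y'" "fst w = x" using assms(3) V by (auto simp: inbox_def)
  hence "snd w = y \<or> snd w = y'" using adj_between[OF V(2), of "snd w"] assms(2) by (simp add: mem_Times_iff)
  thus ?thesis using V \<open>fst w = x\<close> by (cases w) auto
qed

lemma gedges_meet:
  assumes "(u,v) \<in> gedges X Y" "(u',v') \<in> gedges X Y" "(u,v) \<noteq> (u',v')" "inbox w u v" "inbox w u' v'"
  shows "w \<in> {u,v} \<inter> {u',v'}"
  using assms(1)
proof (cases rule: gedgesE)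
  case (H x1 x1' y1)
  have l1: "x1 < x1'" using H by (auto simp: adj_def)
  have w1: "x1 \<le> fst w" "fst w \<le> x1'" "snd w = y1" using assms(4) H l1 by (auto simp: inbox_def)
  show ?thesis using assms(2)
  proof (cases rule: gedgesE)
    case (H x2 x2' y2)
    have l2: "x2 < x2'" using H by (auto simp: adj_def)
    have w2: "x2 \<le> fst w" "fst w \<le> x2'" "snd w = y2" using assms(5) H l2 by (auto simp: inbox_def)
    from adj_overlap[OF \<open>(x1,x1') \<in> adj X\<close> H(1) w1(1,2) w2(1,2)]
    show ?thesis using H \<open>u = (x1,y1)\<close> \<open>v = (x1',y1)\<close> w1(3) w2(3) assms(3) by (cases w) auto
  next
    case (V x2 y2 y2')
    have l2: "y2 < y2'" using V by (auto simp: adj_def)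
    have w2: "y2 \<le> snd w" "snd w \<le> y2'" "fst w = x2" using assms(5) V l2 by (auto simp: inbox_def)
    have a: "fst w = x1 \<or> fst w = x1'" using adj_between[OF \<open>(x1,x1') \<in> adj X\<close>, of "fst w"] w1 w2 V(1) by auto
    have b: "snd w = y2 \<or> snd w = y2'" using adj_between[OF V(2), of "snd w"] w1 w2 H(2) by auto
    show ?thesis using a b V H w1(3) w2(3) by (cases w) auto
  qed
next
  case (V x1 y1 y1')
  have l1: "y1 < y1'" using V by (auto simp: adj_def)
  have w1: "y1 \<le> snd w" "snd w \<le> y1'" "fst w = x1" using assms(4) V l1 by (auto simp: inbox_def)
  show ?thesis using assms(2)
  proof (cases rule: gedgesE)
    case (V x2 y2 y2')
    have l2: "y2 < y2'" using V by (auto simp: adj_def)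
    have w2: "y2 \<le> snd w" "snd w \<le> y2'" "fst w = x2" using assms(5) V l2 by (auto simp: inbox_def)
    from adj_overlap[OF \<open>(y1,y1') \<in> adj Y\<close> V(2) w1(1,2) w2(1,2)]
    show ?thesis using V \<open>u = (x1,y1)\<close> \<open>v = (x1,y1')\<close> w1(3) w2(3) assms(3) by (cases w) auto
  next
    case (H x2 x2' y2)
    have l2: "x2 < x2'" using H by (auto simp: adj_def)
    have w2: "x2 \<le> fst w" "fst w \<le> x2'" "snd w = y2" using assms(5) H l2 by (auto simp: inbox_def)
    have a: "fst w = x2 \<or> fst w = x2'" using adj_between[OF H(1), of "fst w"] w1 w2 \<open>x1 \<in> X\<close> by auto
    have b: "snd w = y1 \<or> snd w = y1'" using adj_between[OF \<open>(y1,y1') \<in> adj Y\<close>, of "snd w"] w1 w2 H(2) by auto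
    show ?thesis using a b V H w1(3) w2(3) by (cases w) auto
  qed
qed



lemma cross_step:
  assumes "(a,b) \<in> R\<^sup>*" "a \<in> A" "b \<notin> A"
  shows "\<exists>c d. (c,d) \<in> R \<and> c \<in> A \<and> d \<notin> A"
  using assms
proof (induction rule: rtrancl_induct)
  case base thus ?case by simp
next
  case (step y z)
  show ?case
  proof (cases "y \<in> A")
    case True thus ?thesis using step by blast
  next
    case False thus ?thesis using step by blast
  qed
qed

lemma spanning:
  assumes fW: "finite W" and ne: "W \<noteq> {}" and ends: "\<forall>(u,v)\<in>H. u \<in> W \<and> v \<in> W"
    and conn: "\<forall>u\<in>W. \<forall>v\<in>W. (u,v) \<in> (H \<union> H\<inverse>)\<^sup>*"
  shows "\<exists>E. E \<subseteq> H \<and> card E + 1 = card W \<and> (\<forall>u\<in>W. \<forall>v\<in>W. (u,v) \<in> (E \<union> E\<inverse>)\<^sup>*)"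
proof -
  have claim: "n < card W \<Longrightarrow> \<exists>W' E. W' \<subseteq> W \<and> E \<subseteq> H \<and> finite E \<and> card W' = n + 1 \<and> card E = n \<and>
      (\<forall>(u,v)\<in>E. u \<in> W' \<and> v \<in> W') \<and> (\<forall>u\<in>W'. \<forall>v\<in>W'. (u,v) \<in> (E \<union> E\<inverse>)\<^sup>*)" for n
  proof (induction n)
    case 0
    obtain w0 where "w0 \<in> W" using ne by blast
    thus ?case by (rule_tac x="{w0}" in exI, rule_tac x="{}" in exI) auto
  next
    case (Suc n)
    then obtain W' E where IH: "W' \<subseteq> W" "E \<subseteq> H" "finite E" "card W' = n + 1" "card E = n"
      "\<forall>(u,v)\<in>E. u \<in> W' \<and> v \<in> W'" "\<forall>u\<in>W'. \<forall>v\<in>W'. (u,v) \<in> (E \<union> E\<inverse>)\<^sup>*" by auto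
    have fW': "finite W'" using IH(1) fW finite_subset by blast
    have "W' \<noteq> W" using IH(4) Suc.prems by auto
    then obtain w where w: "w \<in> W" "w \<notin> W'" using IH(1) by blast
    obtain w0 where w0: "w0 \<in> W'" using IH(4) by (metis card.empty add_eq_0_iff_both_eq_0 equals0I zero_neq_one)
    have "(w0,w) \<in> (H \<union> H\<inverse>)\<^sup>*" using conn w0 w IH(1) by blast
    then obtain c d where cd: "(c,d) \<in> H \<union> H\<inverse>" "c \<in> W'" "d \<notin> W'" using cross_step[OF _ w0 w(2)] by blast
    define e where "e = (if (c,d) \<in> H then (c,d) else (d,c))"
    have eH: "e \<in> H" using cd(1) by (auto simp: e_def)
    have dW: "d \<in> W" using cd(1) ends by (auto simp: e_def)
    have eset: "e = (c,d) \<or> e = (d,c)" by (auto simp: e_def)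
    have eE: "e \<notin> E" using IH(6) cd(3) eset by auto
    define W2 where "W2 = insert d W'"
    define E2 where "E2 = insert e E"
    have sub: "E \<union> E\<inverse> \<subseteq> E2 \<union> E2\<inverse>" by (auto simp: E2_def)
    have ce: "(c,d) \<in> E2 \<union> E2\<inverse>" using eset by (auto simp: E2_def)
    have fromc: "\<forall>u\<in>W2. (c,u) \<in> (E2 \<union> E2\<inverse>)\<^sup>*"
    proof
      fix u assume "u \<in> W2"
      show "(c,u) \<in> (E2 \<union> E2\<inverse>)\<^sup>*"
      proof (cases "u = d")
        case True thus ?thesis using ce by auto
      next
        case False
        hence "u \<in> W'" using \<open>u \<in> W2\<close> by (auto simp: W2_def)
        hence "(c,u) \<in> (E \<union> E\<inverse>)\<^sup>*" using IH(7) cd(2) by blast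
        thus ?thesis by (rule subsetD[OF rtrancl_mono[OF sub]])
      qed
    qed
    have conn2: "\<forall>u\<in>W2. \<forall>v\<in>W2. (u,v) \<in> (E2 \<union> E2\<inverse>)\<^sup>*"
    proof (intro ballI)
      fix u v assume "u \<in> W2" "v \<in> W2"
      hence "(u,c) \<in> (E2 \<union> E2\<inverse>)\<^sup>*" "(c,v) \<in> (E2 \<union> E2\<inverse>)\<^sup>*"
        using rtrancl_sym[OF fromc[rule_format, of u]] fromc[rule_format, of v] by auto
      thus "(u,v) \<in> (E2 \<union> E2\<inverse>)\<^sup>*" by (rule rtrancl_trans)
    qed
    show ?case
    proof (rule exI[of _ W2], rule exI[of _ E2], intro conjI)
      show "W2 \<subseteq> W" using IH(1) dW by (auto simp: W2_def)
      show "E2 \<subseteq> H" using IH(2) eH by (auto simp: E2_def)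
      show "finite E2" using IH(3) by (simp add: E2_def)
      show "card W2 = Suc n + 1" using fW' cd(3) IH(4) by (simp add: W2_def)
      show "card E2 = Suc n" using IH(3) eE IH(5) by (simp add: E2_def)
      show "\<forall>(u,v)\<in>E2. u \<in> W2 \<and> v \<in> W2" using IH(6) eset cd(2) by (auto simp: E2_def W2_def)
      show "\<forall>u\<in>W2. \<forall>v\<in>W2. (u,v) \<in> (E2 \<union> E2\<inverse>)\<^sup>*" by (fact conn2)
    qed
  qed
  have "card W - 1 < card W" using fW ne by (simp add: card_gt_0_iff)
  from claim[OF this] obtain W' E where R: "W' \<subseteq> W" "E \<subseteq> H" "card W' = card W - 1 + 1" "card E = card W - 1"
      "\<forall>u\<in>W'. \<forall>v\<in>W'. (u,v) \<in> (E \<union> E\<inverse>)\<^sup>*" by blast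
  have "card W' = card W" using R(3) fW ne by (simp add: card_gt_0_iff)
  hence "W' = W" using R(1) fW by (simp add: card_subset_eq)
  thus ?thesis using R fW ne by (rule_tac x=E in exI) (auto simp: card_gt_0_iff)
qed

lemma grid_rst:
  assumes "W \<subseteq> X \<times> Y" "finite W" "W \<noteq> {}" "E \<subseteq> gedges X Y" "\<forall>(u,v)\<in>E. u \<in> W \<and> v \<in> W"
    "card E + 1 = card W" "\<forall>u\<in>W. \<forall>v\<in>W. (u,v) \<in> (E \<union> E\<inverse>)\<^sup>*" "S \<subseteq> W"
  shows "is_rst S W E"
  unfolding is_rst_def
proof (intro conjI)
  show "finite W" "W \<noteq> {}" "S \<subseteq> W" "card E + 1 = card W" "\<forall>u\<in>W. \<forall>v\<in>W. (u,v) \<in> (E \<union> E\<inverse>)\<^sup>*"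
    using assms by auto
  show "\<forall>(u,v)\<in>E. u \<in> W \<and> v \<in> W \<and> u \<noteq> v \<and> (fst u = fst v \<or> snd u = snd v)"
    using assms(4,5) gedges_props(1,2) by blast
  show "\<forall>(u,v)\<in>E. (v,u) \<notin> E" using assms(4) gedges_props(3) by blast
  have I: "w = u \<or> w = v" if "(u,v) \<in> E" "w \<in> W" "w \<in> closed_segment u v" for u v w
  proof -
    have "inbox w u v" using segment_box that(3) .
    moreover have "(u,v) \<in> gedges X Y" using that(1) assms(4) by blast
    ultimately show ?thesis using gedge_interior that(2) assms(1) by blast
  qed
  thus "\<forall>(u,v)\<in>E. \<forall>w\<in>W. w \<in> closed_segment u v \<longrightarrow> w = u \<or> w = v" by blast
  have M: "w \<in> {u,v} \<inter> {u',v'}" if "(u,v) \<in> E" "(u',v') \<in> E" "(u,v) \<noteq> (u',v')"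
     "w \<in> closed_segment u v" "w \<in> closed_segment u' v'" for u v u' v' w
  proof -
    have "inbox w u v" "inbox w u' v'" using segment_box that(4,5) by blast+
    moreover have "(u,v) \<in> gedges X Y" "(u',v') \<in> gedges X Y" using that(1,2) assms(4) by blast+
    ultimately show ?thesis using gedges_meet that(3) by blast
  qed
  show "\<forall>(u,v)\<in>E. \<forall>(u',v')\<in>E. (u,v) \<noteq> (u',v') \<longrightarrow> closed_segment u v \<inter> closed_segment u' v' \<subseteq> {u,v} \<inter> {u',v'}"
    using M by blast
qed



lemma sum_UN_le:
  fixes f :: "'b \<Rightarrow> real"
  assumes "finite A" "\<And>a. a \<in> A \<Longrightarrow> finite (B a)" "\<And>x. f x \<ge> 0"
  shows "sum f (\<Union>a\<in>A. B a) \<le> (\<Sum>a\<in>A. sum f (B a))"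
  using assms(1,2)
proof (induction rule: finite_induct)
  case empty thus ?case by simp
next
  case (insert a A)
  have fin: "finite (B a)" "finite (\<Union>a\<in>A. B a)" using insert by auto
  have "sum f (\<Union>x\<in>insert a A. B x) = sum f (B a \<union> (\<Union>x\<in>A. B x))" by simp
  also have "\<dots> \<le> sum f (B a) + sum f (\<Union>x\<in>A. B x)"
  proof -
    have "sum f (B a \<inter> (\<Union>x\<in>A. B x)) \<ge> 0" by (rule sum_nonneg) (simp add: assms(3))
    thus ?thesis using sum_Un[OF fin, of f] by linarith
  qed
  also have "\<dots> \<le> sum f (B a) + (\<Sum>x\<in>A. sum f (B x))" using insert by simp
  also have "\<dots> = (\<Sum>x\<in>insert a A. sum f (B x))" using insert by simp
  finally show ?case .
qed

lemma mono_between: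
  fixes g :: "real \<Rightarrow> real"
  assumes "\<forall>x\<in>C. \<forall>x'\<in>C. x \<le> x' \<longrightarrow> g x \<le> g x'" "a \<in> C" "b \<in> C" "s \<in> C" "min a b \<le> s" "s \<le> max a b"
  shows "min (g a) (g b) \<le> g s \<and> g s \<le> max (g a) (g b)"
proof (cases "a \<le> b")
  case True
  have "g a \<le> g s" using assms(1) assms(2,4,5) True by (simp add: min_def)
  moreover have "g s \<le> g b" using assms(1) assms(3,4,6) True by (simp add: max_def)
  ultimately show ?thesis by (blast intro: min.coboundedI1 max.coboundedI2)
next
  case False
  have "g b \<le> g s" using assms(1) assms(3,4,5) False by (simp add: min_def)
  moreover have "g s \<le> g a" using assms(1) assms(2,4,6) False by (simp add: max_def)
  ultimately show ?thesis by (blast intro: min.coboundedI2 max.coboundedI1)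
qed

lemma rt_sub2: "(a,b) \<in> (R \<union> R\<inverse>)\<^sup>* \<Longrightarrow> R \<subseteq> S \<Longrightarrow> (a,b) \<in> (S \<union> S\<inverse>)\<^sup>*"
proof -
  assume "(a,b) \<in> (R \<union> R\<inverse>)\<^sup>*" "R \<subseteq> S"
  moreover have "R \<union> R\<inverse> \<subseteq> S \<union> S\<inverse>" using \<open>R \<subseteq> S\<close> by auto
  ultimately show ?thesis using rtrancl_mono by blast
qed

lemma l1dist_nonneg: "l1dist u v \<ge> 0" by (simp add: l1dist_def)

lemma snap_tree:
  fixes X Y Cx Cy :: "real set" and g h :: "real \<Rightarrow> real"
  assumes fin: "finite X" "finite Y"
    and rst: "is_rst S V E"
    and VC: "\<forall>p\<in>V. fst p \<in> Cx \<and> snd p \<in> Cy"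
    and gmono: "\<forall>x\<in>Cx. \<forall>x'\<in>Cx. x \<le> x' \<longrightarrow> g x \<le> g x'"
    and hmono: "\<forall>x\<in>Cy. \<forall>x'\<in>Cy. x \<le> x' \<longrightarrow> h x \<le> h x'"
    and gX: "\<forall>x\<in>Cx. g x \<in> X" and hY: "\<forall>y\<in>Cy. h y \<in> Y"
    and SP: "\<forall>s\<in>S. g (fst s) = fst s \<and> h (snd s) = snd s"
  defines "\<phi> \<equiv> \<lambda>p. (g (fst p), h (snd p))"
  defines "H \<equiv> \<Union>(u,v)\<in>E. sedges X Y (\<phi> u) (\<phi> v)"
  defines "W \<equiv> \<phi> ` V \<union> fst ` H \<union> snd ` H"
  shows "\<exists>E'. is_rst S W E' \<and> E' \<subseteq> gedges X Y \<and> W \<subseteq> X \<times> Y \<and> tree_len E' \<le> (\<Sum>(u,v)\<in>E. l1dist (\<phi> u) (\<phi> v))"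
    and "\<And>p. p \<in> tree_pts V E \<Longrightarrow> fst p \<in> Cx \<Longrightarrow> snd p \<in> Cy \<Longrightarrow> \<phi> p \<in> W"
proof -
  have finV: "finite V" and neV: "V \<noteq> {}" and SV: "S \<subseteq> V"
    and Eprops: "\<forall>(u,v)\<in>E. u \<in> V \<and> v \<in> V \<and> u \<noteq> v \<and> (fst u = fst v \<or> snd u = snd v)"
    and connE: "\<forall>u\<in>V. \<forall>v\<in>V. (u,v) \<in> (E \<union> E\<inverse>)\<^sup>*"
    using rst unfolding is_rst_def by auto
  have finE: "finite E" using finV Eprops by (rule_tac finite_subset[of E "V \<times> V"]) auto
  have phiG: "\<phi> u \<in> X \<times> Y" if "u \<in> V" for u using that VC gX hY by (auto simp: \<phi>_def)
  have Eax: "fst (\<phi> u) = fst (\<phi> v) \<or> snd (\<phi> u) = snd (\<phi> v)" if "(u,v) \<in> E" for u v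
    using that Eprops by (auto simp: \<phi>_def)
  have EV: "u \<in> V" "v \<in> V" if "(u,v) \<in> E" for u v using that Eprops by auto
  have Hsub: "H \<subseteq> gedges X Y"
  proof
    fix e assume "e \<in> H"
    then obtain u v where uv: "(u,v) \<in> E" "e \<in> sedges X Y (\<phi> u) (\<phi> v)" unfolding H_def by blast
    show "e \<in> gedges X Y" using sedges_sub[OF phiG[OF EV(1)[OF uv(1)]] phiG[OF EV(2)[OF uv(1)]]] uv(2) by blast
  qed
  have finH: "finite H" unfolding H_def
    by (rule finite_Union) (use finE in \<open>auto intro: finite_sedges[OF fin]\<close>)
  have WG: "W \<subseteq> X \<times> Y"
  proof -
    have "fst e \<in> X \<times> Y \<and> snd e \<in> X \<times> Y" if "e \<in> H" for e
      using gedges_props(4,5)[of "fst e" "snd e" X Y] that Hsub by auto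
    thus ?thesis unfolding W_def using phiG by blast
  qed
  have finW: "finite W" unfolding W_def using finV finH by auto
  have neW: "W \<noteq> {}" unfolding W_def using neV by auto
  have endsH: "\<forall>(u,v)\<in>H. u \<in> W \<and> v \<in> W" unfolding W_def by force
  let ?R = "H \<union> H\<inverse>"
  have sedH: "sedges X Y (\<phi> u) (\<phi> v) \<subseteq> H" if "(u,v) \<in> E" for u v unfolding H_def using that by blast
  have stepE: "(\<phi> u, \<phi> v) \<in> ?R\<^sup>*" if "(u,v) \<in> E" for u v
    using rt_sub2[OF sedges_props(1)[OF fin phiG[OF EV(1)[OF that]] phiG[OF EV(2)[OF that]] Eax[OF that]] sedH[OF that]] .
  have pathV: "(\<phi> a, \<phi> b) \<in> ?R\<^sup>*" if "(a,b) \<in> (E \<union> E\<inverse>)\<^sup>*" for a b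
    using that
  proof (induction rule: rtrancl_induct)
    case base show ?case by simp
  next
    case (step y z)
    have "(\<phi> y, \<phi> z) \<in> ?R\<^sup>*"
    proof (cases "(y,z) \<in> E")
      case True thus ?thesis by (rule stepE)
    next
      case False
      hence "(z,y) \<in> E" using step(2) by auto
      thus ?thesis using rtrancl_sym[OF stepE] by blast
    qed
    thus ?case using step(3) by (rule rtrancl_trans[rotated])
  qed
  obtain u0 where u0: "u0 \<in> V" using neV by blast
  have fromu0: "(\<phi> u0, w) \<in> ?R\<^sup>*" if wW: "w \<in> W" for w
  proof -
    consider (a) v where "v \<in> V" "w = \<phi> v" | (b) e where "e \<in> H" "w = fst e \<or> w = snd e"
      using wW unfolding W_def by blast
    thus ?thesis
    proof cases
      case a thus ?thesis using pathV connE u0 by blast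
    next
      case b
      then obtain u v where uv: "(u,v) \<in> E" "e \<in> sedges X Y (\<phi> u) (\<phi> v)" unfolding H_def by blast
      have sp: "(\<phi> u, fst e) \<in> (sedges X Y (\<phi> u) (\<phi> v) \<union> (sedges X Y (\<phi> u) (\<phi> v))\<inverse>)\<^sup>* \<and>
                (\<phi> u, snd e) \<in> (sedges X Y (\<phi> u) (\<phi> v) \<union> (sedges X Y (\<phi> u) (\<phi> v))\<inverse>)\<^sup>*"
        using sedges_props(3)[OF fin phiG[OF EV(1)[OF uv(1)]] phiG[OF EV(2)[OF uv(1)]] Eax[OF uv(1)] uv(2)] .
      have "(\<phi> u, fst e) \<in> ?R\<^sup>*" by (rule rt_sub2[OF conjunct1[OF sp] sedH[OF uv(1)]])
      moreover have "(\<phi> u, snd e) \<in> ?R\<^sup>*" by (rule rt_sub2[OF conjunct2[OF sp] sedH[OF uv(1)]])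
      ultimately have "(\<phi> u, w) \<in> ?R\<^sup>*" using b(2) by auto
      moreover have "(\<phi> u0, \<phi> u) \<in> ?R\<^sup>*" using pathV connE u0 EV(1)[OF uv(1)] by blast
      ultimately show ?thesis by (rule rtrancl_trans[rotated])
    qed
  qed
  have connW: "\<forall>u\<in>W. \<forall>v\<in>W. (u,v) \<in> ?R\<^sup>*"
  proof (intro ballI)
    fix u v assume "u \<in> W" "v \<in> W"
    thus "(u,v) \<in> ?R\<^sup>*" using rtrancl_sym[OF fromu0[of u]] fromu0[of v] by (rule_tac rtrancl_trans) auto
  qed
  obtain E' where E': "E' \<subseteq> H" "card E' + 1 = card W" "\<forall>u\<in>W. \<forall>v\<in>W. (u,v) \<in> (E' \<union> E'\<inverse>)\<^sup>*"
    using spanning[OF finW neW endsH connW] by blast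
  have SW: "S \<subseteq> W"
  proof
    fix s assume "s \<in> S"
    hence "\<phi> s = s" using SP by (auto simp: \<phi>_def)
    thus "s \<in> W" using SV \<open>s \<in> S\<close> unfolding W_def by force
  qed
  have rstW: "is_rst S W E'"
    by (rule grid_rst[OF WG finW neW _ _ E'(2,3) SW]) (use E'(1) Hsub endsH in auto)
  have "tree_len E' = (\<Sum>e\<in>E'. l1dist (fst e) (snd e))" by (simp add: tree_len_def case_prod_unfold)
  also have "\<dots> \<le> (\<Sum>e\<in>H. l1dist (fst e) (snd e))"
    by (rule sum_mono2[OF finH E'(1)]) (simp add: l1dist_nonneg)
  also have "\<dots> \<le> (\<Sum>(u,v)\<in>E. \<Sum>e\<in>sedges X Y (\<phi> u) (\<phi> v). l1dist (fst e) (snd e))"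
    unfolding H_def case_prod_unfold
    by (rule sum_UN_le[OF finE]) (auto simp: finite_sedges[OF fin] l1dist_nonneg)
  also have "\<dots> = (\<Sum>(u,v)\<in>E. l1dist (\<phi> u) (\<phi> v))"
  proof (rule sum.cong[OF refl])
    fix e assume "e \<in> E"
    then obtain u v where uv: "e = (u,v)" "(u,v) \<in> E" by (cases e) auto
    show "(case e of (u,v) \<Rightarrow> \<Sum>e\<in>sedges X Y (\<phi> u) (\<phi> v). l1dist (fst e) (snd e)) = (case e of (u,v) \<Rightarrow> l1dist (\<phi> u) (\<phi> v))"
      using sedges_props(2)[OF fin phiG[OF EV(1)[OF uv(2)]] phiG[OF EV(2)[OF uv(2)]] Eax[OF uv(2)]] uv(1) by simp
  qed
  finally show "\<exists>E'. is_rst S W E' \<and> E' \<subseteq> gedges X Y \<and> W \<subseteq> X \<times> Y \<and> tree_len E' \<le> (\<Sum>(u,v)\<in>E. l1dist (\<phi> u) (\<phi> v))"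
    using rstW E'(1) Hsub WG by blast
next
  fix p assume p: "p \<in> tree_pts V E" "fst p \<in> Cx" "snd p \<in> Cy"
  have finV: "V \<subseteq> V" and Eprops: "\<forall>(u,v)\<in>E. u \<in> V \<and> v \<in> V \<and> u \<noteq> v \<and> (fst u = fst v \<or> snd u = snd v)"
    using rst unfolding is_rst_def by auto
  show "\<phi> p \<in> W"
  proof (cases "p \<in> V")
    case True thus ?thesis unfolding W_def by blast
  next
    case False
    then obtain u v where uv: "(u,v) \<in> E" "p \<in> closed_segment u v" using p(1) unfolding tree_pts_def by blast
    have uvV: "u \<in> V" "v \<in> V" using uv(1) Eprops by auto
    have bx: "inbox p u v" using segment_box[OF uv(2)] .
    have phiG: "\<phi> q \<in> X \<times> Y" if "q \<in> V" for q using that VC gX hY by (auto simp: \<phi>_def)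
    have bx': "inbox (\<phi> p) (\<phi> u) (\<phi> v)"
      using mono_between[OF gmono, of "fst u" "fst v" "fst p"] mono_between[OF hmono, of "snd u" "snd v" "snd p"]
        bx VC uvV p(2,3) unfolding inbox_def \<phi>_def by auto
    have pG: "\<phi> p \<in> X \<times> Y" using p gX hY by (auto simp: \<phi>_def)
    have ax: "fst (\<phi> u) = fst (\<phi> v) \<or> snd (\<phi> u) = snd (\<phi> v)" using uv(1) Eprops by (auto simp: \<phi>_def)
    have disj: "\<phi> p = \<phi> u \<or> \<phi> p = \<phi> v \<or> (\<exists>e\<in>sedges X Y (\<phi> u) (\<phi> v). \<phi> p = snd e)"
      by (rule sedges_props(4)[OF fin phiG[OF uvV(1)] phiG[OF uvV(2)] ax pG bx'])
    have sub: "sedges X Y (\<phi> u) (\<phi> v) \<subseteq> H" unfolding H_def using uv(1) by blast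
    have "\<phi> u \<in> W" "\<phi> v \<in> W" using uvV unfolding W_def by blast+
    moreover have "snd e \<in> W" if "e \<in> sedges X Y (\<phi> u) (\<phi> v)" for e
      using sub that unfolding W_def by blast
    ultimately show ?thesis using disj by auto
  qed
qed



lemma rst_finE: "is_rst S V E \<Longrightarrow> finite E"
proof -
  assume r: "is_rst S V E"
  hence "finite V" "\<forall>(u,v)\<in>E. u \<in> V \<and> v \<in> V" unfolding is_rst_def by auto
  thus "finite E" by (rule_tac finite_subset[of E "V \<times> V"]) auto
qed

lemma rst_finV: "is_rst S V E \<Longrightarrow> finite V" unfolding is_rst_def by auto

lemma sum_split_k:
  fixes F :: "nat \<Rightarrow> real"
  shows "(\<Sum>j\<in>{..k}. F j) = F k + (\<Sum>j<k. F j)"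
  by (simp add: lessThan_Suc_atMost[symmetric])

lemma grid_hanan:
  assumes "V \<subseteq> fst ` P \<times> snd ` P" "E \<subseteq> gedges (fst ` P) (snd ` P)"
  shows "tree_pts V E \<subseteq> hanan_grid P"
proof
  fix p assume "p \<in> tree_pts V E"
  then consider "p \<in> V" | u v where "(u,v) \<in> E" "p \<in> closed_segment u v" unfolding tree_pts_def by blast
  thus "p \<in> hanan_grid P"
  proof cases
    case 1
    then obtain q where "q \<in> P" "fst p = fst q" using assms(1) by force
    thus ?thesis unfolding hanan_grid_def by blast
  next
    case 2
    have bx: "inbox p u v" using segment_box[OF 2(2)] .
    have "(u,v) \<in> gedges (fst ` P) (snd ` P)" using 2(1) assms(2) by blast
    thus ?thesis
    proof (cases rule: gedgesE)
      case (H x x' y)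
      hence "snd p = y" using bx by (auto simp: inbox_def)
      then obtain q where "q \<in> P" "snd p = snd q" using H(2) by force
      thus ?thesis unfolding hanan_grid_def by blast
    next
      case (V x y y')
      hence "fst p = x" using bx by (auto simp: inbox_def)
      then obtain q where "q \<in> P" "fst p = fst q" using V(1) by force
      thus ?thesis unfolding hanan_grid_def by blast
    qed
  qed
qed

lemma grid_exists:
  assumes "finite X" "finite Y" "X \<noteq> {}" "Y \<noteq> {}"
  shows "\<exists>E. E \<subseteq> gedges X Y \<and> (\<forall>S. S \<subseteq> X \<times> Y \<longrightarrow> is_rst S (X \<times> Y) E)"
proof -
  let ?G = "X \<times> Y" and ?H = "gedges X Y"
  have ends: "\<forall>(u,v)\<in>?H. u \<in> ?G \<and> v \<in> ?G" using gedges_props(4,5) by blast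
  have line: "(p,q) \<in> (?H \<union> ?H\<inverse>)\<^sup>*" if "p \<in> ?G" "q \<in> ?G" "fst p = fst q \<or> snd p = snd q" for p q
    by (rule rt_sub2[OF sedges_props(1)[OF assms(1,2) that] sedges_sub[OF that(1,2)]])
  have conn: "\<forall>u\<in>?G. \<forall>v\<in>?G. (u,v) \<in> (?H \<union> ?H\<inverse>)\<^sup>*"
  proof (intro ballI)
    fix u v assume uv: "u \<in> ?G" "v \<in> ?G"
    have m: "(fst v, snd u) \<in> ?G" using uv by auto
    have "(u, (fst v, snd u)) \<in> (?H \<union> ?H\<inverse>)\<^sup>*" by (rule line) (use uv m in auto)
    moreover have "((fst v, snd u), v) \<in> (?H \<union> ?H\<inverse>)\<^sup>*" by (rule line) (use uv m in auto)
    ultimately show "(u,v) \<in> (?H \<union> ?H\<inverse>)\<^sup>*" by (rule rtrancl_trans)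
  qed
  obtain E where E: "E \<subseteq> ?H" "card E + 1 = card ?G" "\<forall>u\<in>?G. \<forall>v\<in>?G. (u,v) \<in> (E \<union> E\<inverse>)\<^sup>*"
    using spanning[of ?G ?H] ends conn assms by auto
  have "is_rst S ?G E" if "S \<subseteq> ?G" for S
    by (rule grid_rst[OF _ _ _ E(1) _ E(2,3) that]) (use assms E(1) ends in auto)
  thus ?thesis using E(1) by blast
qed



lemma reduce:
  assumes finP: "finite P" and XY: "X = fst ` P" "Y = snd ` P" and neX: "X \<noteq> {}" "Y \<noteq> {}"
    and PsP: "\<forall>i<k. Ps i \<subseteq> P"
    and tl: "two_level_rst k Ps Vt Et T"
  shows "\<exists>Vt2 Et2 T2. Vt2 \<subseteq> X \<times> Y \<and> Et2 \<subseteq> gedges X Y \<and>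
     T2 \<in> (\<Pi>\<^sub>E i\<in>{..<k}. Pow (X \<times> Y) \<times> Pow (gedges X Y)) \<and>
     two_level_rst k Ps Vt2 Et2 T2 \<and> two_level_len k Et2 T2 \<le> two_level_len k Et T"
proof -
  have fin: "finite X" "finite Y" using finP XY by auto
  define TT where "TT = (\<lambda>j. if j < k then T j else (Vt, Et))"
  define SS where "SS = (\<lambda>j. if j < k then Ps j else {})"
  have rstTT: "is_rst (SS j) (fst (TT j)) (snd (TT j))" if "j \<le> k" for j
    using tl that unfolding two_level_rst_def TT_def SS_def by (cases "j < k") auto
  have inter: "\<forall>i<k. \<exists>p. p \<in> tree_pts Vt Et \<inter> tree_pts (fst (T i)) (snd (T i))"
    using tl unfolding two_level_rst_def by blast
  obtain pp where pp: "\<forall>i<k. pp i \<in> tree_pts Vt Et \<inter> tree_pts (fst (T i)) (snd (T i))"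
    using choice[of "\<lambda>i p. i < k \<longrightarrow> p \<in> tree_pts Vt Et \<inter> tree_pts (fst (T i)) (snd (T i))"] inter by blast
  define Cx where "Cx = X \<union> (\<Union>j\<in>{..k}. fst ` fst (TT j)) \<union> fst ` pp ` {..<k}"
  define Cy where "Cy = Y \<union> (\<Union>j\<in>{..k}. snd ` fst (TT j)) \<union> snd ` pp ` {..<k}"
  have finCx: "finite Cx" "finite Cy" unfolding Cx_def Cy_def using fin rst_finV[OF rstTT] by auto
  define I where "I = Sigma {..k} (\<lambda>j. snd (TT j))"
  have finI: "finite I" unfolding I_def using rst_finE[OF rstTT] by auto
  have endsTT: "u \<in> fst (TT j) \<and> v \<in> fst (TT j)" if "j \<le> k" "(u,v) \<in> snd (TT j)" for j u v
    using rstTT[OF that(1)] that(2) unfolding is_rst_def by blast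
  have IC: "\<forall>i\<in>I. fst (fst (snd i)) \<in> Cx \<and> fst (snd (snd i)) \<in> Cx"
    "\<forall>i\<in>I. snd (fst (snd i)) \<in> Cy \<and> snd (snd (snd i)) \<in> Cy"
  proof (safe)
    fix j e assume "(j,e) \<in> I"
    hence je: "j \<le> k" "e \<in> snd (TT j)" by (auto simp: I_def)
    have "fst e \<in> fst (TT j)" "snd e \<in> fst (TT j)" using endsTT[OF je(1), of "fst e" "snd e"] je(2) by auto
    thus "fst (fst (snd (j,e))) \<in> Cx" "fst (snd (snd (j,e))) \<in> Cx" "snd (fst (snd (j,e))) \<in> Cy" "snd (snd (snd (j,e))) \<in> Cy"
      using je(1) unfolding Cx_def Cy_def by force+
  qed
  obtain g where g: "\<forall>x\<in>Cx. \<forall>y\<in>Cx. x \<le> y \<longrightarrow> g x \<le> g y" "\<forall>x\<in>Cx. g x \<in> X" "\<forall>x\<in>X. g x = x"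
    "(\<Sum>i\<in>I. \<bar>g (fst (snd (snd i))) - g (fst (fst (snd i)))\<bar>) \<le> (\<Sum>i\<in>I. \<bar>fst (snd (snd i)) - fst (fst (snd i))\<bar>)"
  proof -
    have "X \<subseteq> Cx" unfolding Cx_def by blast
    from snap1[OF finCx(1) fin(1) neX(1) this finI, of "\<lambda>i. fst (fst (snd i))" "\<lambda>i. fst (snd (snd i))"] IC(1)
    show ?thesis using that by blast
  qed
  obtain h where h: "\<forall>x\<in>Cy. \<forall>y\<in>Cy. x \<le> y \<longrightarrow> h x \<le> h y" "\<forall>x\<in>Cy. h x \<in> Y" "\<forall>x\<in>Y. h x = x"
    "(\<Sum>i\<in>I. \<bar>h (snd (snd (snd i))) - h (snd (fst (snd i)))\<bar>) \<le> (\<Sum>i\<in>I. \<bar>snd (snd (snd i)) - snd (fst (snd i))\<bar>)"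
  proof -
    have "Y \<subseteq> Cy" unfolding Cy_def by blast
    from snap1[OF finCx(2) fin(2) neX(2) this finI, of "\<lambda>i. snd (fst (snd i))" "\<lambda>i. snd (snd (snd i))"] IC(2)
    show ?thesis using that by blast
  qed
  define \<phi> where "\<phi> = (\<lambda>p::pt. (g (fst p), h (snd p)))"
  define HH where "HH = (\<lambda>j. \<Union>(u,v)\<in>snd (TT j). sedges X Y (\<phi> u) (\<phi> v))"
  define W where "W = (\<lambda>j. \<phi> ` fst (TT j) \<union> fst ` HH j \<union> snd ` HH j)"
  have VC: "\<forall>p\<in>fst (TT j). fst p \<in> Cx \<and> snd p \<in> Cy" if "j \<le> k" for j
    using that unfolding Cx_def Cy_def by blast
  have SP: "\<forall>s\<in>SS j. g (fst s) = fst s \<and> h (snd s) = snd s" for j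
  proof
    fix s assume "s \<in> SS j"
    hence "s \<in> P" using PsP by (auto simp: SS_def split: if_splits)
    thus "g (fst s) = fst s \<and> h (snd s) = snd s" using g(3) h(3) XY by auto
  qed
  note ST = snap_tree[OF fin rstTT VC g(1) h(1) g(2) h(2) SP]
  have ST1: "\<exists>E'. is_rst (SS j) (W j) E' \<and> E' \<subseteq> gedges X Y \<and> W j \<subseteq> X \<times> Y \<and>
      tree_len E' \<le> (\<Sum>(u,v)\<in>snd (TT j). l1dist (\<phi> u) (\<phi> v))" if "j \<le> k" for j
    using ST(1)[OF that that] unfolding W_def HH_def \<phi>_def by simp
  have ST2: "\<phi> p \<in> W j" if "j \<le> k" "p \<in> tree_pts (fst (TT j)) (snd (TT j))" "fst p \<in> Cx" "snd p \<in> Cy" for j p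
    using ST(2)[OF that(1) that(1) that(2-4)] unfolding W_def HH_def \<phi>_def by simp
  obtain EE where EE: "\<forall>j\<le>k. is_rst (SS j) (W j) (EE j) \<and> EE j \<subseteq> gedges X Y \<and> W j \<subseteq> X \<times> Y \<and>
      tree_len (EE j) \<le> (\<Sum>(u,v)\<in>snd (TT j). l1dist (\<phi> u) (\<phi> v))"
    using choice[of "\<lambda>j E'. j \<le> k \<longrightarrow> is_rst (SS j) (W j) E' \<and> E' \<subseteq> gedges X Y \<and> W j \<subseteq> X \<times> Y \<and>
      tree_len E' \<le> (\<Sum>(u,v)\<in>snd (TT j). l1dist (\<phi> u) (\<phi> v))"] ST1 by blast
  define T2 where "T2 = (\<lambda>i. if i < k then (W i, EE i) else undefined)"
  have ppW: "\<phi> (pp i) \<in> W k \<and> \<phi> (pp i) \<in> W i" if "i < k" for i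
  proof -
    have c: "fst (pp i) \<in> Cx" "snd (pp i) \<in> Cy" using that unfolding Cx_def Cy_def by auto
    have "pp i \<in> tree_pts (fst (TT k)) (snd (TT k))" "pp i \<in> tree_pts (fst (TT i)) (snd (TT i))"
      using pp that by (auto simp: TT_def)
    thus ?thesis using ST2 c that by auto
  qed
  have WT: "W j \<subseteq> tree_pts (W j) E" for j E unfolding tree_pts_def by blast
  have tl2: "two_level_rst k Ps (W k) (EE k) T2"
    unfolding two_level_rst_def
  proof (intro conjI allI impI)
    have "is_rst (SS k) (W k) (EE k)" using EE by simp
    thus "is_rst {} (W k) (EE k)" by (simp add: SS_def)
  next
    fix i assume i: "i < k"
    have "is_rst (SS i) (W i) (EE i)" using EE i by simp
    thus "is_rst (Ps i) (fst (T2 i)) (snd (T2 i))" using i by (simp add: SS_def T2_def)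
    show "tree_pts (W k) (EE k) \<inter> tree_pts (fst (T2 i)) (snd (T2 i)) \<noteq> {}"
      using ppW[OF i] WT[of k "EE k"] WT[of i "EE i"] i by (auto simp: T2_def)
  qed
  have finE: "\<forall>j\<in>{..k}. finite (snd (TT j))" using rst_finE[OF rstTT] by auto
  have "two_level_len k (EE k) T2 = (\<Sum>j\<in>{..k}. tree_len (EE j))"
    unfolding two_level_len_def sum_split_k by (simp add: T2_def)
  also have "\<dots> \<le> (\<Sum>j\<in>{..k}. \<Sum>(u,v)\<in>snd (TT j). l1dist (\<phi> u) (\<phi> v))"
    by (rule sum_mono) (use EE in auto)
  also have "\<dots> = (\<Sum>i\<in>I. l1dist (\<phi> (fst (snd i))) (\<phi> (snd (snd i))))"
    unfolding I_def by (subst sum.Sigma[OF _ finE]) (simp_all add: case_prod_unfold)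
  also have "\<dots> = (\<Sum>i\<in>I. \<bar>g (fst (snd (snd i))) - g (fst (fst (snd i)))\<bar>) + (\<Sum>i\<in>I. \<bar>h (snd (snd (snd i))) - h (snd (fst (snd i)))\<bar>)"
    unfolding sum.distrib[symmetric] by (rule sum.cong) (auto simp: l1dist_def \<phi>_def abs_minus_commute)
  also have "\<dots> \<le> (\<Sum>i\<in>I. \<bar>fst (snd (snd i)) - fst (fst (snd i))\<bar>) + (\<Sum>i\<in>I. \<bar>snd (snd (snd i)) - snd (fst (snd i))\<bar>)"
    using g(4) h(4) by linarith
  also have "\<dots> = (\<Sum>i\<in>I. l1dist (fst (snd i)) (snd (snd i)))"
    unfolding sum.distrib[symmetric] by (rule sum.cong) (auto simp: l1dist_def abs_minus_commute)
  also have "\<dots> = (\<Sum>j\<in>{..k}. tree_len (snd (TT j)))"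
    unfolding I_def tree_len_def by (subst sum.Sigma[OF _ finE]) (simp_all add: case_prod_unfold)
  also have "\<dots> = two_level_len k Et T"
    unfolding two_level_len_def sum_split_k by (simp add: TT_def)
  finally have len: "two_level_len k (EE k) T2 \<le> two_level_len k Et T" .
  have T2P: "T2 \<in> (\<Pi>\<^sub>E i\<in>{..<k}. Pow (X \<times> Y) \<times> Pow (gedges X Y))"
    using EE unfolding T2_def by (auto simp: PiE_def extensional_def)
  show ?thesis using EE tl2 len T2P by (rule_tac x="W k" in exI, rule_tac x="EE k" in exI, rule_tac x=T2 in exI) auto
qed



theorem corollary1:
  fixes P :: "pt set" and k :: nat and Ps :: "nat \<Rightarrow> pt set"
  assumes "finite P"
    and "k \<ge> 1"
    and "\<forall>i<k. Ps i \<noteq> {}"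
    and "\<forall>i<k. \<forall>j<k. i \<noteq> j \<longrightarrow> Ps i \<inter> Ps j = {}"
    and "(\<Union>i<k. Ps i) = P"
  shows "\<exists>Vt Et T. two_level_rst k Ps Vt Et T \<and>
           tree_pts Vt Et \<subseteq> hanan_grid P \<and>
           (\<forall>i<k. tree_pts (fst (T i)) (snd (T i)) \<subseteq> hanan_grid P) \<and>
           (\<forall>Vt' Et' T'. two_level_rst k Ps Vt' Et' T' \<longrightarrow>
              two_level_len k Et T \<le> two_level_len k Et' T')"
proof -
  define X where "X = fst ` P"
  define Y where "Y = snd ` P"
  have fin: "finite X" "finite Y" using assms(1) by (auto simp: X_def Y_def)
  have PsP: "\<forall>i<k. Ps i \<subseteq> P" using assms(5) by blast
  have "P \<noteq> {}" using assms(2,3) PsP by (metis less_le_trans subset_empty zero_less_one)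
  hence ne: "X \<noteq> {}" "Y \<noteq> {}" by (auto simp: X_def Y_def)
  have PG: "P \<subseteq> X \<times> Y" by (force simp: X_def Y_def)
  let ?G = "X \<times> Y"
  define Sset where "Sset = {(Vt,Et,T). Vt \<subseteq> ?G \<and> Et \<subseteq> gedges X Y \<and>
      T \<in> (\<Pi>\<^sub>E i\<in>{..<k}. Pow ?G \<times> Pow (gedges X Y)) \<and> two_level_rst k Ps Vt Et T}"
  have finGE: "finite (gedges X Y)"
    by (rule finite_subset[of _ "?G \<times> ?G"]) (use fin gedges_props(4,5) in auto)
  have finS: "finite Sset"
  proof (rule finite_subset)
    show "Sset \<subseteq> Pow ?G \<times> Pow (gedges X Y) \<times> (\<Pi>\<^sub>E i\<in>{..<k}. Pow ?G \<times> Pow (gedges X Y))"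
      unfolding Sset_def by auto
    show "finite (Pow ?G \<times> Pow (gedges X Y) \<times> (\<Pi>\<^sub>E i\<in>{..<k}. Pow ?G \<times> Pow (gedges X Y)))"
      using fin finGE by (intro finite_cartesian_product finite_PiE) auto
  qed
  obtain E0 where E0: "E0 \<subseteq> gedges X Y" "\<forall>S. S \<subseteq> ?G \<longrightarrow> is_rst S ?G E0"
    using grid_exists[OF fin ne] by blast
  define T0 where "T0 = (\<lambda>i. if i < k then (?G, E0) else undefined)"
  have "two_level_rst k Ps ?G E0 T0"
    unfolding two_level_rst_def
  proof (intro conjI allI impI)
    show "is_rst {} ?G E0" by (rule E0(2)[rule_format]) simp
    fix i assume i: "i < k"
    have "Ps i \<subseteq> ?G" using PsP PG i by blast
    hence "is_rst (Ps i) ?G E0" by (rule E0(2)[rule_format])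
    thus "is_rst (Ps i) (fst (T0 i)) (snd (T0 i))" using i by (simp add: T0_def)
    have "?G \<noteq> {}" using ne by auto
    hence "?G \<inter> ?G \<noteq> {}" by simp
    moreover have "?G \<subseteq> tree_pts ?G E0" unfolding tree_pts_def by blast
    ultimately show "tree_pts ?G E0 \<inter> tree_pts (fst (T0 i)) (snd (T0 i)) \<noteq> {}" using i by (auto simp: T0_def)
  qed
  moreover have "T0 \<in> (\<Pi>\<^sub>E i\<in>{..<k}. Pow ?G \<times> Pow (gedges X Y))"
    unfolding T0_def using E0(1) by (auto simp: PiE_def extensional_def)
  ultimately have "(?G, E0, T0) \<in> Sset" using E0(1) unfolding Sset_def by simp
  hence neS: "Sset \<noteq> {}" by blast
  define f where "f = (\<lambda>(Vt::pt set, Et::(pt \<times> pt) set, T::nat \<Rightarrow> pt set \<times> (pt \<times> pt) set). two_level_len k Et T)"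
  obtain m where m: "is_arg_min f (\<lambda>x. x \<in> Sset) m" using ex_is_arg_min_if_finite[OF finS neS, of f] by blast
  obtain Vt Et T where mdef: "m = (Vt, Et, T)" by (cases m) auto
  have mS: "(Vt, Et, T) \<in> Sset" using m mdef by (simp add: is_arg_min_def)
  have mmin: "\<And>y. y \<in> Sset \<Longrightarrow> f m \<le> f y" using m by (auto simp: is_arg_min_def not_less)
  have props: "Vt \<subseteq> ?G" "Et \<subseteq> gedges X Y" "T \<in> (\<Pi>\<^sub>E i\<in>{..<k}. Pow ?G \<times> Pow (gedges X Y))" "two_level_rst k Ps Vt Et T"
    using mS unfolding Sset_def by auto
  show ?thesis
  proof (rule exI[of _ Vt], rule exI[of _ Et], rule exI[of _ T], intro conjI allI impI)
    show "two_level_rst k Ps Vt Et T" by (fact props(4))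
    show "tree_pts Vt Et \<subseteq> hanan_grid P" using grid_hanan props(1,2) unfolding X_def Y_def by blast
  next
    fix i assume i: "i < k"
    have "T i \<in> Pow ?G \<times> Pow (gedges X Y)" using props(3) i by (auto simp: PiE_def Pi_def)
    hence "fst (T i) \<subseteq> ?G" "snd (T i) \<subseteq> gedges X Y" by (auto simp: mem_Times_iff)
    thus "tree_pts (fst (T i)) (snd (T i)) \<subseteq> hanan_grid P" using grid_hanan unfolding X_def Y_def by blast
  next
    fix Vt' Et' T' assume tl: "two_level_rst k Ps Vt' Et' T'"
    obtain Vt2 Et2 T2 where R: "Vt2 \<subseteq> ?G" "Et2 \<subseteq> gedges X Y" "T2 \<in> (\<Pi>\<^sub>E i\<in>{..<k}. Pow ?G \<times> Pow (gedges X Y))"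
      "two_level_rst k Ps Vt2 Et2 T2" "two_level_len k Et2 T2 \<le> two_level_len k Et' T'"
      using reduce[OF assms(1) X_def Y_def ne PsP tl] by blast
    have "(Vt2, Et2, T2) \<in> Sset" using R unfolding Sset_def by auto
    hence "f m \<le> f (Vt2, Et2, T2)" by (rule mmin)
    thus "two_level_len k Et T \<le> two_level_len k Et' T'" using R(5) mdef by (simp add: f_def)
  qed
qed


end
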